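(* Let $S$ be a finite non-empty set and $\Sigma\subseteq\mathbb{R}_+\times S$ locally finite, and let $(X_n,\eta_n)$ be a time-homogeneous irreducible Markov chain on $\Sigma$ such that every line $\Lambda_k=\{x:(x,k)\in\Sigma\}$ is unbounded. Suppose that for some $p>2$ there is $C_p<\infty$ with $\mathbb{E}_{x,i}[|X_{n+1}-X_n|^p]\le C_p$ for all $(x,i)\in\Sigma$; that $q_{ij}(x)\to q_{ij}$ as $x\to\infty$ with $(q_{ij})$ an irreducible stochastic matrix; and that there exist $c_i\in\mathbb{R}$, $s_i^2\ge0$ (at least one $s_i^2\ne0$) with $\mu_i(x)=c_i/x+o(x^{-1})$ and $\sigma_i^2(x)=s_i^2+o(1)$ as $x\to\infty$. Let $b_i\in\mathbb{R}$, $i\in S$, let $\nu\in(0,p]$, let $f_\nu$ be as in the context, and set $Z_n:=(f_\nu(X_n,\eta_n))^{1/\nu}$. Then, as $x\to\infty$, \[\mathbb{E}_{x,i}[Z_{n+1}-Z_n]=\frac{c_i}x+\frac1{2x}\sum_{j\in S}(b_j-b_i)q_{ij}+o(x^{-1}),\] and there is a constant $B<\infty$ such that $\mathbb{E}_{x,i}[(Z_{n+1}-Z_n)^2]\le B$.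
   Context: Locally finite means $\Sigma\cap([0,r]\times S)$ is finite for every $r\ge0$. $\mathbb{E}_{x,i}[\cdot]=\mathbb{E}[\cdot\mid X_n=x,\eta_n=i]$; $q_{ij}(x)=\Pr[\eta_{n+1}=j\mid X_n=x,\eta_n=i]$; $\mu_i(x)=\mathbb{E}_{x,i}[X_{n+1}-X_n]$; $\sigma_i^2(x)=\mathbb{E}_{x,i}[(X_{n+1}-X_n)^2]$. $x_0:=1+\sqrt{|\nu|\max_i|b_i|}$ and $f_\nu(x,i)=x^\nu+\frac\nu2b_ix^{\nu-2}$ for $x\ge x_0$, $f_\nu(x,i)=x_0^\nu+\frac\nu2b_ix_0^{\nu-2}$ for $x<x_0$ (this is positive). *)

theory Defs
  imports "HOL-Probability.Probability"
begin

text \<open>The Markov chain on \<Sigma> \<subseteq> R_+ \<times> S is encoded by its (time-homogeneous)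
  one-step transition kernel P: P (x,i) is the law of (X_{n+1}, eta_{n+1}) given
  (X_n, eta_n) = (x,i). Since \<Sigma> is locally finite it is countable, so pmfs suffice.\<close>

definition locally_finite :: "(real \<times> 'a) set \<Rightarrow> 'a set \<Rightarrow> bool" where
  "locally_finite \<Sigma> S \<longleftrightarrow> (\<forall>r\<ge>0. finite (\<Sigma> \<inter> ({0..r} \<times> S)))"

definition line :: "(real \<times> 'a) set \<Rightarrow> 'a \<Rightarrow> real set" where
  "line \<Sigma> k = {x. (x, k) \<in> \<Sigma>}"

definition irreducible_chain :: "(real \<times> 'a) set \<Rightarrow> (real \<times> 'a \<Rightarrow> (real \<times> 'a) pmf) \<Rightarrow> bool" where
  "irreducible_chain \<Sigma> P \<longleftrightarrow>
     (\<forall>u\<in>\<Sigma>. set_pmf (P u) \<subseteq> \<Sigma>) \<and>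
     (\<forall>u\<in>\<Sigma>. \<forall>v\<in>\<Sigma>. (u, v) \<in> {(a, b). a \<in> \<Sigma> \<and> b \<in> set_pmf (P a)}\<^sup>*)"

definition stochastic_matrix :: "'a set \<Rightarrow> ('a \<Rightarrow> 'a \<Rightarrow> real) \<Rightarrow> bool" where
  "stochastic_matrix S Q \<longleftrightarrow> (\<forall>i\<in>S. \<forall>j\<in>S. Q i j \<ge> 0) \<and> (\<forall>i\<in>S. (\<Sum>j\<in>S. Q i j) = 1)"

definition irreducible_matrix :: "'a set \<Rightarrow> ('a \<Rightarrow> 'a \<Rightarrow> real) \<Rightarrow> bool" where
  "irreducible_matrix S Q \<longleftrightarrow>
     (\<forall>i\<in>S. \<forall>j\<in>S. (i, j) \<in> {(a, b). a \<in> S \<and> b \<in> S \<and> Q a b > 0}\<^sup>*)"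

definition ExP :: "(real \<times> 'a \<Rightarrow> (real \<times> 'a) pmf) \<Rightarrow> real \<Rightarrow> 'a \<Rightarrow> (real \<times> 'a \<Rightarrow> real) \<Rightarrow> real" where
  "ExP P x i g = measure_pmf.expectation (P (x, i)) g"

definition qx :: "(real \<times> 'a \<Rightarrow> (real \<times> 'a) pmf) \<Rightarrow> 'a \<Rightarrow> 'a \<Rightarrow> real \<Rightarrow> real" where
  "qx P i j x = measure_pmf.prob (P (x, i)) {u. snd u = j}"

definition mu :: "(real \<times> 'a \<Rightarrow> (real \<times> 'a) pmf) \<Rightarrow> 'a \<Rightarrow> real \<Rightarrow> real" where
  "mu P i x = ExP P x i (\<lambda>u. fst u - x)"

definition sigma2 :: "(real \<times> 'a \<Rightarrow> (real \<times> 'a) pmf) \<Rightarrow> 'a \<Rightarrow> real \<Rightarrow> real" where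
  "sigma2 P i x = ExP P x i (\<lambda>u. (fst u - x)^2)"

definition along :: "(real \<times> 'a) set \<Rightarrow> 'a \<Rightarrow> real filter" where
  "along \<Sigma> i = inf at_top (principal (line \<Sigma> i))"

definition x0 :: "'a set \<Rightarrow> ('a \<Rightarrow> real) \<Rightarrow> real \<Rightarrow> real" where
  "x0 S b \<nu> = 1 + sqrt (\<bar>\<nu>\<bar> * Max ((\<lambda>i. \<bar>b i\<bar>) ` S))"

definition f_nu :: "'a set \<Rightarrow> ('a \<Rightarrow> real) \<Rightarrow> real \<Rightarrow> real \<times> 'a \<Rightarrow> real" where
  "f_nu S b \<nu> u = (let x = fst u; i = snd u; y = (if x \<ge> x0 S b \<nu> then x else x0 S b \<nu>)
                    in y powr \<nu> + \<nu> / 2 * b i * y powr (\<nu> - 2))"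

definition Zf :: "'a set \<Rightarrow> ('a \<Rightarrow> real) \<Rightarrow> real \<Rightarrow> real \<times> 'a \<Rightarrow> real" where
  "Zf S b \<nu> u = (f_nu S b \<nu> u) powr (1 / \<nu>)"

end

theory Submission
  imports Defs "HOL-Library.Landau_Symbols"
begin


definition Dc :: "real \<Rightarrow> real" where
  "Dc r = \<bar>r * (r - 1)\<bar> * ((1/2) powr (r - 2) + (3/2) powr (r - 2))"

lemma taylor_pow:
  fixes a r :: real
  assumes a: "\<bar>a\<bar> \<le> 1/2"
  shows "\<bar>(1 + a) powr r - 1 - r * a\<bar> \<le> Dc r / 2 * a^2"
proof -
  define diff :: "nat \<Rightarrow> real \<Rightarrow> real" where
    "diff = (\<lambda>m t. if m = 0 then (1+t) powr r else if m = 1 then r * (1+t) powr (r - 1)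
                    else r * (r - 1) * (1+t) powr (r - 2))"
  have D: "\<forall>m t. m < 2 \<and> \<bar>t\<bar> \<le> \<bar>a\<bar> \<longrightarrow> DERIV (diff m) t :> diff (Suc m) t"
  proof (intro allI impI)
    fix m t assume h: "m < (2::nat) \<and> \<bar>t\<bar> \<le> \<bar>a\<bar>"
    hence tp: "1 + t > 0" using a by auto
    have "m = 0 \<or> m = 1" using h by auto
    thus "DERIV (diff m) t :> diff (Suc m) t"
    proof
      assume "m = 0"
      thus ?thesis unfolding diff_def using tp
        by (auto intro!: derivative_eq_intros)
    next
      assume "m = 1"
      thus ?thesis unfolding diff_def using tp
        by (auto intro!: derivative_eq_intros simp: algebra_simps)
    qed
  qed
  from Maclaurin_bi_le[of diff "\<lambda>t. (1+t) powr r" 2 a, OF _ D]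
  obtain t where t: "\<bar>t\<bar> \<le> \<bar>a\<bar>"
    "(1+a) powr r = (\<Sum>m<2. diff m 0 / fact m * a ^ m) + diff 2 t / fact 2 * a ^ 2"
    by (auto simp: diff_def)
  have e: "(1+a) powr r - 1 - r * a = r * (r - 1) * (1+t) powr (r - 2) / 2 * a^2"
    using t(2) by (simp add: diff_def numeral_2_eq_2 lessThan_Suc)
  have t1: "1/2 \<le> 1 + t" "1 + t \<le> 3/2" using t(1) a by auto
  have pb: "(1+t) powr (r - 2) \<le> (1/2) powr (r - 2) + (3/2) powr (r - 2)"
  proof (cases "r - 2 \<ge> 0")
    case True
    then have "(1+t) powr (r - 2) \<le> (3/2) powr (r - 2)" using t1 by (intro powr_mono2) auto
    then show ?thesis by (smt (verit) powr_ge_zero)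
  next
    case False
    then have "(1+t) powr (r - 2) \<le> (1/2) powr (r - 2)" using t1 by (intro powr_mono2') auto
    then show ?thesis by (smt (verit) powr_ge_zero)
  qed
  have "\<bar>(1+a) powr r - 1 - r * a\<bar> = \<bar>r * (r - 1)\<bar> * (1+t) powr (r - 2) / 2 * a^2"
    unfolding e by (simp add: abs_mult)
  also have "\<dots> \<le> Dc r / 2 * a^2" unfolding Dc_def
    by (intro mult_right_mono divide_right_mono mult_left_mono pb) auto
  finally show ?thesis .
qed

lemma Zkey:
  fixes M nu bj y :: real
  assumes M: "M \<ge> 0" and nu: "nu > 0" and bj: "\<bar>bj\<bar> \<le> M"
    and y: "y \<ge> 1 + sqrt (nu * M)"
  shows "y powr nu + nu / 2 * bj * y powr (nu - 2) > 0"
    and "\<bar>(y powr nu + nu / 2 * bj * y powr (nu - 2)) powr (1/nu) - y - bj / (2*y)\<bar>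
           \<le> Dc (1/nu) * nu^2 * M^2 / 8 / y^2"
proof -
  have s0: "sqrt (nu*M) \<ge> 0" using M nu by simp
  have y1: "y \<ge> 1" using y s0 by linarith
  have ypos: "y > 0" using y1 by simp
  define a where "a = nu * bj / (2 * y^2)"
  have sq: "(sqrt (nu*M))^2 = nu * M" using M nu by (simp add: less_imp_le zero_le_mult_iff)
  have "nu * M \<le> y^2"
  proof -
    have "sqrt (nu*M) \<le> y" using y by linarith
    hence "(sqrt (nu*M))^2 \<le> y^2" using s0 by (intro power_mono) auto
    thus ?thesis using sq by simp
  qed
  moreover have "nu * \<bar>bj\<bar> \<le> nu * M" using bj nu by simp
  ultimately have "\<bar>a\<bar> * (2*y^2) \<le> y^2" unfolding a_def using ypos nu
    by (simp add: abs_mult abs_divide)(smt (verit) mult_left_mono)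
  hence "(2*\<bar>a\<bar>) * y^2 \<le> 1 * y^2" by simp
  hence a12: "\<bar>a\<bar> \<le> 1/2" using ypos mult_le_cancel_right_pos[of "y^2" "2*\<bar>a\<bar>" 1] by simp
  have pd: "y powr (nu - 2) = y powr nu / y^2"
    using ypos by (simp add: powr_diff powr_numeral)
  have inner: "y powr nu + nu / 2 * bj * y powr (nu - 2) = y powr nu * (1 + a)"
    unfolding pd a_def using ypos by (simp add: field_simps)
  have ap: "1 + a > 0" using a12 by auto
  show "y powr nu + nu / 2 * bj * y powr (nu - 2) > 0" unfolding inner using ypos ap by simp
  have "(y powr nu * (1 + a)) powr (1/nu) = (y powr nu) powr (1/nu) * (1+a) powr (1/nu)"
    using ap by (simp add: powr_mult)
  also have "(y powr nu) powr (1/nu) = y" using nu ypos by (simp add: powr_powr)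
  finally have v: "(y powr nu + nu / 2 * bj * y powr (nu - 2)) powr (1/nu) = y * (1+a) powr (1/nu)"
    unfolding inner .
  have ra: "y * ((1/nu) * a) = bj / (2*y)" unfolding a_def using nu ypos
    by (simp add: field_simps power2_eq_square)
  have "\<bar>(y powr nu + nu / 2 * bj * y powr (nu - 2)) powr (1/nu) - y - bj / (2*y)\<bar>
        = y * \<bar>(1+a) powr (1/nu) - 1 - (1/nu) * a\<bar>"
  proof -
    have "y * (1+a) powr (1/nu) - y - y * ((1/nu) * a) = y * ((1+a) powr (1/nu) - 1 - (1/nu) * a)"
      by (simp add: algebra_simps)
    thus ?thesis unfolding v ra[symmetric] using ypos by (simp add: abs_mult)
  qed
  also have "\<dots> \<le> y * (Dc (1/nu) / 2 * a^2)"
    using taylor_pow[OF a12, of "1/nu"] ypos by (intro mult_left_mono) auto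
  also have "\<dots> = Dc (1/nu) * nu^2 * bj^2 / 8 / y^3"
    unfolding a_def using ypos by (simp add: field_simps power2_eq_square power3_eq_cube)
  also have "\<dots> \<le> Dc (1/nu) * nu^2 * M^2 / 8 / y^2"
  proof -
    have D0: "Dc (1/nu) \<ge> 0" unfolding Dc_def by simp
    have "bj^2 \<le> M^2" using bj by (metis abs_le_square_iff abs_of_nonneg M)
    hence n: "Dc (1/nu) * nu^2 * bj^2 / 8 \<le> Dc (1/nu) * nu^2 * M^2 / 8"
      using D0 by (intro divide_right_mono mult_left_mono) auto
    have "y^2 \<le> y^3" using y1 by (simp add: power_increasing)
    hence "Dc (1/nu) * nu^2 * bj^2 / 8 / y^3 \<le> Dc (1/nu) * nu^2 * bj^2 / 8 / y^2"
      using ypos D0 by (intro divide_left_mono) auto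
    also have "\<dots> \<le> Dc (1/nu) * nu^2 * M^2 / 8 / y^2" using n ypos by (intro divide_right_mono) auto
    finally show ?thesis .
  qed
  finally show "\<bar>(y powr nu + nu / 2 * bj * y powr (nu - 2)) powr (1/nu) - y - bj / (2*y)\<bar>
           \<le> Dc (1/nu) * nu^2 * M^2 / 8 / y^2" .
qed


lemma Zf_approx:
  assumes S: "finite S" and j: "j \<in> S" and nu: "nu > 0"
  shows "\<bar>Zf S b nu (x,j) - max x (x0 S b nu) - b j / (2 * max x (x0 S b nu))\<bar>
          \<le> Dc (1/nu) * nu^2 * (Max ((\<lambda>i. \<bar>b i\<bar>) ` S))^2 / 8 / (max x (x0 S b nu))^2"
proof -
  define M where "M = Max ((\<lambda>i. \<bar>b i\<bar>) ` S)"
  have bj: "\<bar>b j\<bar> \<le> M" unfolding M_def using S j by (intro Max_ge) auto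
  have M0: "M \<ge> 0" using bj by linarith
  have X: "x0 S b nu = 1 + sqrt (nu * M)" unfolding x0_def M_def using nu by simp
  have y: "max x (x0 S b nu) \<ge> 1 + sqrt (nu * M)" using X by simp
  have Z: "Zf S b nu (x,j) = ((max x (x0 S b nu)) powr nu + nu / 2 * b j * (max x (x0 S b nu)) powr (nu - 2)) powr (1/nu)"
    unfolding Zf_def f_nu_def Let_def by (simp add: max_def)
  show ?thesis using Zkey(2)[OF M0 nu bj y] unfolding Z M_def .
qed

lemma x0_ge1: assumes "finite S" "S \<noteq> {}" shows "x0 S b nu \<ge> 1"
proof -
  obtain j where j: "j \<in> S" using assms by auto
  have "\<bar>b j\<bar> \<le> Max ((\<lambda>i. \<bar>b i\<bar>) ` S)" using assms j by (intro Max_ge) auto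
  hence "0 \<le> Max ((\<lambda>i. \<bar>b i\<bar>) ` S)" by linarith
  thus ?thesis unfolding x0_def by simp
qed

lemma sq_le_powr:
  fixes t p :: real assumes "p \<ge> 2" shows "t^2 \<le> 1 + \<bar>t\<bar> powr p"
proof (cases "\<bar>t\<bar> \<le> 1")
  case True
  hence "t^2 \<le> 1" by (simp add: abs_square_le_1)
  thus ?thesis by (smt (verit) powr_ge_zero)
next
  case False
  hence "t^2 = \<bar>t\<bar> powr 2" by (simp add: powr_numeral)
  also have "\<dots> \<le> \<bar>t\<bar> powr p" using False assms by (intro powr_mono) auto
  finally show ?thesis by simp
qed


lemma abs_le_1_sq: fixes t :: real shows "\<bar>t\<bar> \<le> 1 + t^2"
proof -
  have "0 \<le> (\<bar>t\<bar> - 1)^2" by simp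
  also have "\<dots> = t^2 - 2*\<bar>t\<bar> + 1" by (simp add: power2_diff)
  finally show ?thesis by simp
qed


lemma sq_sum_le: fixes a c :: real shows "(a + c)^2 \<le> 2*a^2 + 2*c^2"
proof -
  have "0 \<le> (a - c)^2" by simp
  thus ?thesis by (simp add: power2_diff power2_sum)
qed

lemma sq_le_of_abs: fixes a c :: real assumes "\<bar>a\<bar> \<le> c" shows "a^2 \<le> c^2"
proof -
  have "\<bar>a\<bar>^2 \<le> c^2" using assms by (intro power_mono) auto
  thus ?thesis by simp
qed



theorem lemma4p5:
  fixes S :: "'a set" and \<Sigma> :: "(real \<times> 'a) set"
    and P :: "real \<times> 'a \<Rightarrow> (real \<times> 'a) pmf"
    and p Cp \<nu> :: real and Q :: "'a \<Rightarrow> 'a \<Rightarrow> real"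
    and c s2 b :: "'a \<Rightarrow> real"
  assumes S: "finite S" "S \<noteq> {}"
    and \<Sigma>: "\<Sigma> \<subseteq> {0..} \<times> S" "locally_finite \<Sigma> S"
    and irr: "irreducible_chain \<Sigma> P"
    and unb: "\<forall>k\<in>S. \<not> bdd_above (line \<Sigma> k)"
    and p: "p > 2"
    and mom: "\<forall>(x, i)\<in>\<Sigma>. integrable (measure_pmf (P (x, i))) (\<lambda>u. \<bar>fst u - x\<bar> powr p)
                          \<and> ExP P x i (\<lambda>u. \<bar>fst u - x\<bar> powr p) \<le> Cp"
    and qlim: "\<forall>i\<in>S. \<forall>j\<in>S. (qx P i j \<longlongrightarrow> Q i j) (along \<Sigma> i)"
    and Qst: "stochastic_matrix S Q" and Qirr: "irreducible_matrix S Q"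
    and s2: "\<forall>i\<in>S. s2 i \<ge> 0" "\<exists>i\<in>S. s2 i \<noteq> 0"
    and muas: "\<forall>i\<in>S. (\<lambda>x. mu P i x - c i / x) \<in> o[along \<Sigma> i](\<lambda>x. 1 / x)"
    and sigas: "\<forall>i\<in>S. (sigma2 P i \<longlongrightarrow> s2 i) (along \<Sigma> i)"
    and nu: "0 < \<nu>" "\<nu> \<le> p"
  shows "(\<forall>i\<in>S. (\<lambda>x. ExP P x i (\<lambda>u. Zf S b \<nu> u - Zf S b \<nu> (x, i))
                      - (c i / x + 1 / (2 * x) * (\<Sum>j\<in>S. (b j - b i) * Q i j)))
                   \<in> o[along \<Sigma> i](\<lambda>x. 1 / x))
       \<and> (\<exists>B. \<forall>(x, i)\<in>\<Sigma>.
              integrable (measure_pmf (P (x, i))) (\<lambda>u. (Zf S b \<nu> u - Zf S b \<nu> (x, i))^2)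
            \<and> ExP P x i (\<lambda>u. (Zf S b \<nu> u - Zf S b \<nu> (x, i))^2) \<le> B)"
proof -
  define M where "M = Max ((\<lambda>i. \<bar>b i\<bar>) ` S)"
  define X0 where "X0 = x0 S b \<nu>"
  define K2 where "K2 = Dc (1/\<nu>) * \<nu>^2 * M^2 / 8"
  define Z where "Z = Zf S b \<nu>"
  obtain j0 where j0: "j0 \<in> S" using S by auto
  have bM: "\<And>j. j \<in> S \<Longrightarrow> \<bar>b j\<bar> \<le> M" unfolding M_def using S by (intro Max_ge) auto
  have M0: "M \<ge> 0" using bM[OF j0] by linarith
  have X01: "X0 \<ge> 1" unfolding X0_def using x0_ge1[OF S] .
  have K20: "K2 \<ge> 0" unfolding K2_def Dc_def by simp
  have app: "\<And>x j. j \<in> S \<Longrightarrow> \<bar>Z (x,j) - max x X0 - b j / (2 * max x X0)\<bar> \<le> K2 / (max x X0)^2"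
    unfolding Z_def X0_def K2_def M_def using Zf_approx[OF S(1) _ nu(1)] by blast
  have bnd1: "\<And>x j. j \<in> S \<Longrightarrow> \<bar>Z (x,j) - max x X0\<bar> \<le> M/2 + K2"
  proof -
    fix x j assume j: "j \<in> S"
    have y1: "max x X0 \<ge> 1" using X01 by simp
    have "\<bar>b j / (2 * max x X0)\<bar> = \<bar>b j\<bar> / (2 * max x X0)" using y1 by (simp add: abs_divide)
    also have "\<dots> \<le> \<bar>b j\<bar> / 2" using y1 by (intro divide_left_mono) auto
    finally have A: "\<bar>b j / (2 * max x X0)\<bar> \<le> M/2" using bM[OF j] by linarith
    have "K2 / (max x X0)^2 \<le> K2 / 1" using y1 K20 by (intro divide_left_mono) (auto simp: one_le_power)
    hence B: "K2 / (max x X0)^2 \<le> K2" by simp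
    show "\<bar>Z (x,j) - max x X0\<bar> \<le> M/2 + K2" using app[OF j, of x] A B by linarith
  qed
  have supp: "\<And>x i u. (x,i) \<in> \<Sigma> \<Longrightarrow> u \<in> set_pmf (P (x,i)) \<Longrightarrow> u \<in> \<Sigma>"
    using irr unfolding irreducible_chain_def by blast
  have suppS: "\<And>x i u. (x,i) \<in> \<Sigma> \<Longrightarrow> u \<in> set_pmf (P (x,i)) \<Longrightarrow> snd u \<in> S \<and> fst u \<ge> 0"
    using supp \<Sigma>(1) by fastforce
  have sq: "\<And>t. t^2 \<le> 1 + \<bar>t\<bar> powr p" using p by (intro sq_le_powr) auto
  have intp: "\<And>x i. (x,i) \<in> \<Sigma> \<Longrightarrow> integrable (measure_pmf (P (x,i))) (\<lambda>u. \<bar>fst u - x\<bar> powr p)"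
    and Ep: "\<And>x i. (x,i) \<in> \<Sigma> \<Longrightarrow> ExP P x i (\<lambda>u. \<bar>fst u - x\<bar> powr p) \<le> Cp"
    using mom by auto
  have int1p: "\<And>x i. (x,i) \<in> \<Sigma> \<Longrightarrow> integrable (measure_pmf (P (x,i))) (\<lambda>u. 1 + \<bar>fst u - x\<bar> powr p)"
    using intp by auto
  have intD2: "\<And>x i. (x,i) \<in> \<Sigma> \<Longrightarrow> integrable (measure_pmf (P (x,i))) (\<lambda>u. (fst u - x)^2)"
  proof -
    fix x i assume xi: "(x,i) \<in> \<Sigma>"
    show "integrable (measure_pmf (P (x,i))) (\<lambda>u. (fst u - x)^2)"
      by (rule Bochner_Integration.integrable_bound[OF int1p[OF xi]]) (auto simp: sq)
  qed
  have ED2: "\<And>x i. (x,i) \<in> \<Sigma> \<Longrightarrow> ExP P x i (\<lambda>u. (fst u - x)^2) \<le> 1 + Cp"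
  proof -
    fix x i assume xi: "(x,i) \<in> \<Sigma>"
    have "ExP P x i (\<lambda>u. (fst u - x)^2) \<le> ExP P x i (\<lambda>u. 1 + \<bar>fst u - x\<bar> powr p)"
      unfolding ExP_def by (intro integral_mono intD2 int1p xi sq)
    also have "\<dots> = 1 + ExP P x i (\<lambda>u. \<bar>fst u - x\<bar> powr p)"
      unfolding ExP_def using intp[OF xi] by (simp add: measure_pmf.prob_space)
    finally show "ExP P x i (\<lambda>u. (fst u - x)^2) \<le> 1 + Cp" using Ep[OF xi] by linarith
  qed
  show ?thesis
  proof
    show "\<forall>i\<in>S. (\<lambda>x. ExP P x i (\<lambda>u. Zf S b \<nu> u - Zf S b \<nu> (x, i))
                      - (c i / x + 1 / (2 * x) * (\<Sum>j\<in>S. (b j - b i) * Q i j)))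
                   \<in> o[along \<Sigma> i](\<lambda>x. 1 / x)"
    proof
      fix i assume i: "i \<in> S"
      define F where "F = along \<Sigma> i"
      define R where "R = (\<lambda>x u. Z u - Z (x,i) - (fst u - x)
                  - 1 / (2*x) * (\<Sum>j\<in>S. (b j - b i) * indicator {v. snd v = j} u))"
      define CR where "CR = 4 * (X0 + 2*M + 5*K2)"
      define g1 where "g1 = (\<lambda>x. mu P i x - c i / x)"
      define g2 where "g2 = (\<lambda>x. 1 / (2*x) * (\<Sum>j\<in>S. (b j - b i) * (qx P i j x - Q i j)))"
      define g3 where "g3 = (\<lambda>x. ExP P x i (R x))"
      have ev: "eventually (\<lambda>x. (x,i) \<in> \<Sigma> \<and> x \<ge> 2*X0) F"
        unfolding F_def along_def eventually_inf_principal
        by (rule eventually_mono[OF eventually_ge_at_top[of "2*X0"]]) (auto simp: line_def)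
      have sumind: "(\<Sum>j\<in>S. f j * indicator {v. snd v = j} u) = f (snd u)"
        if "snd u \<in> S" for f :: "'a \<Rightarrow> real" and u :: "real \<times> 'a"
      proof -
        have "(\<Sum>j\<in>S. f j * indicator {v. snd v = j} u) = (\<Sum>j\<in>S. if snd u = j then f j else 0)"
          by (intro sum.cong) (auto simp: indicator_def)
        also have "\<dots> = f (snd u)" using S(1) that by simp
        finally show ?thesis .
      qed
      have Rb: "\<bar>R x u\<bar> \<le> CR * (1 + (fst u - x)^2) / x^2"
        if xi: "(x,i) \<in> \<Sigma>" and x2: "x \<ge> 2*X0" and u: "u \<in> set_pmf (P (x,i))" for x u
      proof -
        define X' where "X' = fst u"
        define j where "j = snd u"
        define D where "D = X' - x"
        have j: "j \<in> S" and X'0: "X' \<ge> 0" using suppS[OF xi u] unfolding j_def X'_def by auto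
        have xpos: "x > 0" and xX0: "x \<ge> X0" and x1: "x \<ge> 1" using x2 X01 by auto
        have mx: "max x X0 = x" using xX0 by simp
        have Ru: "R x u = Z (X',j) - Z (x,i) - D - (b j - b i) / (2*x)"
          unfolding R_def D_def X'_def j_def using sumind[of u "\<lambda>j. b j - b i"] suppS[OF xi u] by simp
        have e0: "\<bar>Z (x,i) - x - b i / (2*x)\<bar> \<le> K2 / x^2" using app[OF i, of x] mx by simp
        have bi: "\<bar>b i\<bar> \<le> M" and bj: "\<bar>b j\<bar> \<le> M" using bM i j by auto
        have CR0: "M + 5*K2 \<le> CR" "4 * (X0 + 2*M + 2*K2) \<le> CR" unfolding CR_def using X01 M0 K20 by auto
        have x2pos: "x^2 > 0" using xpos by simp
        show ?thesis
        proof (cases "X' \<ge> x/2")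
          case True
          have X'pos: "X' > 0" using True xpos by linarith
          have my: "max X' X0 = X'" using True x2 by simp
          have e1: "\<bar>Z (X',j) - X' - b j / (2*X')\<bar> \<le> K2 / X'^2" using app[OF j, of X'] my by simp
          have "K2 / X'^2 \<le> K2 / (x/2)^2" using True xpos K20
            by (intro divide_left_mono power_mono mult_pos_pos) auto
          hence e1': "K2 / X'^2 \<le> 4*K2 / x^2" by (simp add: power_divide mult.commute)
          have "b j / (2*X') - b j / (2*x) = b j * (-D) / (2*X'*x)"
            unfolding D_def using X'pos xpos by (simp add: field_simps)
          hence "\<bar>b j / (2*X') - b j / (2*x)\<bar> = \<bar>b j\<bar> * \<bar>D\<bar> / (2*X'*x)"
            using X'pos xpos by (simp add: abs_divide abs_mult)
          also have "\<dots> \<le> M * \<bar>D\<bar> / (2*X'*x)" using X'pos xpos bj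
            by (intro divide_right_mono mult_right_mono) auto
          also have "\<dots> \<le> M * \<bar>D\<bar> / x^2" using X'pos xpos M0 True
            by (intro divide_left_mono) (auto simp: power2_eq_square)
          finally have e2: "\<bar>b j / (2*X') - b j / (2*x)\<bar> \<le> M * \<bar>D\<bar> / x^2" .
          have "R x u = (Z (X',j) - X' - b j / (2*X')) - (Z (x,i) - x - b i / (2*x))
                  + (b j / (2*X') - b j / (2*x))"
            unfolding Ru D_def by (simp add: field_simps diff_divide_distrib)
          hence "\<bar>R x u\<bar> \<le> 4*K2/x^2 + K2/x^2 + M * \<bar>D\<bar> / x^2" using e0 e1 e1' e2 by linarith
          also have "\<dots> = (5*K2 + M * \<bar>D\<bar>) / x^2" by (simp only: add_divide_distrib[symmetric]) simp
          also have "\<dots> \<le> CR * (1 + D^2) / x^2"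
          proof (intro divide_right_mono)
            have d: "\<bar>D\<bar> \<le> 1 + D^2" by (rule abs_le_1_sq)
            have "M * \<bar>D\<bar> \<le> M * (1 + D^2)" using M0 d by (intro mult_left_mono) auto
            moreover have "5*K2 \<le> 5*K2 * (1 + D^2)"
            proof -
              have "0 \<le> 5*K2*D^2" using K20 by simp
              thus ?thesis by (simp add: distrib_left)
            qed
            moreover have "(M + 5*K2) * (1 + D^2) \<le> CR * (1 + D^2)" using CR0 by (intro mult_right_mono) auto
            moreover have "(M + 5*K2) * (1 + D^2) = M * (1 + D^2) + 5*K2 * (1 + D^2)" by (simp add: distrib_right)
            ultimately show "5*K2 + M * \<bar>D\<bar> \<le> CR * (1 + D^2)" by linarith
          qed simp
          finally show ?thesis unfolding D_def X'_def .
        next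
          case False
          have f1: "\<bar>Z (X',j) - max X' X0\<bar> \<le> M/2 + K2" using bnd1[OF j] .
          have f2: "\<bar>Z (x,i) - x\<bar> \<le> M/2 + K2" using bnd1[OF i, of x] mx by simp
          have f3: "\<bar>max X' X0 - X'\<bar> \<le> X0" using X'0 X01 by (simp add: max_def)
          have "\<bar>b j - b i\<bar> / (2*x) \<le> (2*M) / (2*1)" using bi bj x1
            by (intro frac_le) auto
          hence f4: "\<bar>(b j - b i) / (2*x)\<bar> \<le> M" using xpos by (simp add: abs_divide)
          have "R x u = (Z (X',j) - max X' X0) + (max X' X0 - X') - (Z (x,i) - x) - (b j - b i) / (2*x)"
            unfolding Ru D_def by simp
          hence Rw: "\<bar>R x u\<bar> \<le> X0 + 2*M + 2*K2" using f1 f2 f3 f4 by linarith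
          have DD: "x^2 \<le> 4 * D^2"
          proof -
            have "x \<le> 2 * \<bar>D\<bar>" using False unfolding D_def by (simp add: abs_if)
            hence "x^2 \<le> (2*\<bar>D\<bar>)^2" using xpos by (intro power_mono) auto
            thus ?thesis by (simp add: power_mult_distrib)
          qed
          have W0: "X0 + 2*M + 2*K2 \<ge> 0" using X01 M0 K20 by simp
          have "X0 + 2*M + 2*K2 = (X0 + 2*M + 2*K2) * x^2 / x^2" using x2pos by simp
          also have "\<dots> \<le> (X0 + 2*M + 2*K2) * (4 * D^2) / x^2"
            using W0 DD x2pos by (intro divide_right_mono mult_left_mono) auto
          also have "\<dots> \<le> CR * (1 + D^2) / x^2"
          proof (intro divide_right_mono)
            have "(X0 + 2*M + 2*K2) * (4 * D^2) = (4 * (X0 + 2*M + 2*K2)) * D^2" by simp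
            also have "\<dots> \<le> CR * D^2" using CR0 by (intro mult_right_mono) auto
            also have "\<dots> \<le> CR * (1 + D^2)" using CR0 W0 by (intro mult_left_mono) auto
            finally show "(X0 + 2*M + 2*K2) * (4 * D^2) \<le> CR * (1 + D^2)" .
          qed simp
          finally show ?thesis using Rw unfolding D_def X'_def by linarith
        qed
      qed
      have CRp: "CR \<ge> 0" unfolding CR_def using X01 M0 K20 by simp
      have decomp: "ExP P x i (\<lambda>u. Zf S b \<nu> u - Zf S b \<nu> (x, i))
                      - (c i / x + 1 / (2 * x) * (\<Sum>j\<in>S. (b j - b i) * Q i j)) = g1 x + g2 x + g3 x
             \<and> \<bar>g3 x\<bar> \<le> CR * (2 + Cp) / x^2"
        if xi: "(x,i) \<in> \<Sigma>" and x2: "x \<ge> 2*X0" for x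
      proof -
        let ?M = "measure_pmf (P (x,i))"
        have xpos: "x > 0" using x2 X01 by auto
        have intB: "integrable ?M (\<lambda>u. CR * (1 + (fst u - x)^2) / x^2)"
          using intD2[OF xi] by auto
        have intR: "integrable ?M (R x)"
        proof (rule Bochner_Integration.integrable_bound[OF intB])
          show "AE u in ?M. norm (R x u) \<le> norm (CR * (1 + (fst u - x)^2) / x^2)"
            unfolding AE_measure_pmf_iff real_norm_def using Rb[OF xi x2] by (meson abs_ge_self order_trans)
        qed simp
        have intD: "integrable ?M (\<lambda>u. fst u - x)"
        proof -
          have int1D: "integrable ?M (\<lambda>u. 1 + (fst u - x)^2)" using intD2[OF xi] by auto
          show ?thesis
        proof (rule Bochner_Integration.integrable_bound[OF int1D])
          show "AE u in ?M. norm (fst u - x) \<le> norm (1 + (fst u - x)^2)"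
            unfolding AE_measure_pmf_iff real_norm_def
            by (intro ballI order_trans[OF abs_le_1_sq abs_ge_self])
        qed auto
        qed
        have intI: "integrable ?M (\<lambda>u. 1 / (2*x) * (\<Sum>j\<in>S. (b j - b i) * indicator {v. snd v = j} u))"
          by (intro Bochner_Integration.integrable_mult_right Bochner_Integration.integrable_sum integrable_real_indicator)
             (auto simp: less_top[symmetric])
        have split: "(\<lambda>u. Z u - Z (x,i)) = (\<lambda>u. (fst u - x)
                  + 1 / (2*x) * (\<Sum>j\<in>S. (b j - b i) * indicator {v. snd v = j} u) + R x u)"
          unfolding R_def by auto
        have EI: "integral\<^sup>L ?M (\<lambda>u. 1 / (2*x) * (\<Sum>j\<in>S. (b j - b i) * indicator {v. snd v = j} u))
                = 1 / (2*x) * (\<Sum>j\<in>S. (b j - b i) * qx P i j x)"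
        proof -
          have ii: "integrable ?M (\<lambda>u. (b j - b i) * indicator {v. snd v = j} u)" for j
            by (intro Bochner_Integration.integrable_mult_right integrable_real_indicator)
               (auto simp: less_top[symmetric])
          show ?thesis unfolding qx_def integral_mult_right_zero
            by (subst Bochner_Integration.integral_sum[OF ii]) simp
        qed
        have "ExP P x i (\<lambda>u. Z u - Z (x,i)) = mu P i x + 1 / (2*x) * (\<Sum>j\<in>S. (b j - b i) * qx P i j x) + g3 x"
          unfolding ExP_def split g3_def mu_def
          by (subst Bochner_Integration.integral_add[OF Bochner_Integration.integrable_add[OF intD intI] intR], subst Bochner_Integration.integral_add[OF intD intI], subst EI)
             (simp add: EI ExP_def)
        note that = this
        have A: "ExP P x i (\<lambda>u. Zf S b \<nu> u - Zf S b \<nu> (x, i))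
                      - (c i / x + 1 / (2 * x) * (\<Sum>j\<in>S. (b j - b i) * Q i j)) = g1 x + g2 x + g3 x"
        proof -
          have se: "(\<Sum>j\<in>S. (b j - b i) * qx P i j x) = (\<Sum>j\<in>S. (b j - b i) * Q i j)
                     + (\<Sum>j\<in>S. (b j - b i) * (qx P i j x - Q i j))"
            by (simp add: sum.distrib[symmetric] algebra_simps)
          have "1 / (2*x) * (\<Sum>j\<in>S. (b j - b i) * qx P i j x) = 1 / (2*x) * (\<Sum>j\<in>S. (b j - b i) * Q i j)
                     + 1 / (2*x) * (\<Sum>j\<in>S. (b j - b i) * (qx P i j x - Q i j))"
            unfolding se by (simp add: distrib_left)
          thus ?thesis using that unfolding Z_def g1_def g2_def by linarith
        qed
        have "\<bar>g3 x\<bar> \<le> integral\<^sup>L ?M (\<lambda>u. \<bar>R x u\<bar>)" unfolding g3_def ExP_def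
          by (rule integral_abs_bound)
        also have "\<dots> \<le> integral\<^sup>L ?M (\<lambda>u. CR * (1 + (fst u - x)^2) / x^2)"
          by (intro integral_mono_AE integrable_abs intR intB) (auto simp: AE_measure_pmf_iff Rb[OF xi x2])
        also have "\<dots> = CR * (1 + ExP P x i (\<lambda>u. (fst u - x)^2)) / x^2"
          unfolding ExP_def using intD2[OF xi] by (simp add: measure_pmf.prob_space)
        also have "\<dots> \<le> CR * (2 + Cp) / x^2"
          using ED2[OF xi] CRp by (intro divide_right_mono mult_left_mono) auto
        finally show ?thesis using A by simp
      qed
      have o1: "g1 \<in> o[F](\<lambda>x. 1 / x)" unfolding g1_def F_def using muas i by blast
      have evpos: "eventually (\<lambda>x. x > 0) F"
        using ev by (rule eventually_mono) (use X01 in auto)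
      have o2: "g2 \<in> o[F](\<lambda>x. 1 / x)"
      proof (rule smalloI_tendsto)
        have "((\<lambda>x. 1/2 * (\<Sum>j\<in>S. (b j - b i) * (qx P i j x - Q i j))) \<longlongrightarrow> 1/2 * (\<Sum>j\<in>S. (b j - b i) * (Q i j - Q i j))) F"
          using qlim i unfolding F_def by (intro tendsto_intros) auto
        hence "((\<lambda>x. 1/2 * (\<Sum>j\<in>S. (b j - b i) * (qx P i j x - Q i j))) \<longlongrightarrow> 0) F" by simp
        thus "((\<lambda>x. g2 x / (1 / x)) \<longlongrightarrow> 0) F"
          by (rule tendsto_cong[THEN iffD1, rotated])
             (rule eventually_mono[OF evpos], simp add: g2_def)
        show "eventually (\<lambda>x. 1 / x \<noteq> 0) F" using evpos by (rule eventually_mono) simp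
      qed
      have o3: "g3 \<in> o[F](\<lambda>x. 1 / x)"
      proof (rule landau_o.smallI)
        fix e :: real assume e: "e > 0"
        define A where "A = \<bar>CR * (2 + Cp)\<bar>"
        have "eventually (\<lambda>x. x \<ge> A / e) F"
          unfolding F_def along_def eventually_inf_principal
          by (rule eventually_mono[OF eventually_ge_at_top[of "A / e"]]) auto
        thus "eventually (\<lambda>x. norm (g3 x) \<le> e * norm (1 / x)) F"
        proof (rule eventually_elim2[OF ev])
          fix x assume h: "(x,i) \<in> \<Sigma> \<and> 2*X0 \<le> x" and xa: "x \<ge> A / e"
          have xpos: "x > 0" using h X01 by auto
          have "\<bar>g3 x\<bar> \<le> CR * (2 + Cp) / x^2" using decomp[of x] h by blast
          also have "\<dots> \<le> A / x^2" unfolding A_def by (intro divide_right_mono) auto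
          finally have "\<bar>g3 x\<bar> \<le> A / x^2" .
          also have "\<dots> = (A / x) / x" by (simp add: power2_eq_square)
          also have "\<dots> \<le> e / x"
          proof (intro divide_right_mono)
            show "A / x \<le> e" using xa xpos e by (simp add: divide_simps mult.commute)
          qed (use xpos in auto)
          finally show "norm (g3 x) \<le> e * norm (1 / x)" using xpos by simp
        qed
      qed
      have sumo: "(\<lambda>x. g1 x + g2 x + g3 x) \<in> o[F](\<lambda>x. 1 / x)"
        by (intro sum_in_smallo(1) o1 o2 o3)
      have ev2: "eventually (\<lambda>x. g1 x + g2 x + g3 x = ExP P x i (\<lambda>u. Zf S b \<nu> u - Zf S b \<nu> (x, i))
                      - (c i / x + 1 / (2 * x) * (\<Sum>j\<in>S. (b j - b i) * Q i j))) F"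
        using ev by (rule eventually_mono) (rule sym, use decomp in blast)
      show "(\<lambda>x. ExP P x i (\<lambda>u. Zf S b \<nu> u - Zf S b \<nu> (x, i))
                      - (c i / x + 1 / (2 * x) * (\<Sum>j\<in>S. (b j - b i) * Q i j)))
                   \<in> o[along \<Sigma> i](\<lambda>x. 1 / x)"
        using landau_o.small.in_cong[OF ev2] sumo unfolding F_def by simp
    qed
  next
    define K1 where "K1 = M/2 + K2"
    show "\<exists>B. \<forall>(x, i)\<in>\<Sigma>.
              integrable (measure_pmf (P (x, i))) (\<lambda>u. (Zf S b \<nu> u - Zf S b \<nu> (x, i))^2)
            \<and> ExP P x i (\<lambda>u. (Zf S b \<nu> u - Zf S b \<nu> (x, i))^2) \<le> B"
    proof (intro exI[of _ "2 + 2 * Cp + 8 * K1^2"] ballI, clarify)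
      fix x i assume xi: "(x,i) \<in> \<Sigma>"
      have i: "i \<in> S" using xi \<Sigma>(1) by auto
      have pw: "(Z u - Z (x,i))^2 \<le> 2 * (1 + \<bar>fst u - x\<bar> powr p) + 8 * K1^2"
        if u: "u \<in> set_pmf (P (x,i))" for u
      proof -
        have j: "snd u \<in> S" using suppS[OF xi u] by simp
        have e1: "\<bar>Z u - max (fst u) X0\<bar> \<le> K1" using bnd1[OF j, of "fst u"] unfolding K1_def by simp
        have e2: "\<bar>Z (x,i) - max x X0\<bar> \<le> K1" using bnd1[OF i, of x] unfolding K1_def by simp
        have e3: "\<bar>max (fst u) X0 - max x X0\<bar> \<le> \<bar>fst u - x\<bar>" by (simp add: max_def abs_if)
        have "\<bar>Z u - Z (x,i)\<bar> \<le> \<bar>fst u - x\<bar> + 2 * K1" using e1 e2 e3 by linarith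
        hence "(Z u - Z (x,i))^2 \<le> (\<bar>fst u - x\<bar> + 2 * K1)^2"
          by (rule sq_le_of_abs)
        also have "\<dots> \<le> 2 * (fst u - x)^2 + 8 * K1^2"
          using sq_sum_le[of "\<bar>fst u - x\<bar>" "2*K1"] by (simp add: power_mult_distrib)
        also have "\<dots> \<le> 2 * (1 + \<bar>fst u - x\<bar> powr p) + 8 * K1^2" using sq[of "fst u - x"] by (simp add: distrib_left)
        finally show ?thesis .
      qed
      have intg: "integrable (measure_pmf (P (x,i))) (\<lambda>u. 2 * (1 + \<bar>fst u - x\<bar> powr p) + 8 * K1^2)"
        by (intro Bochner_Integration.integrable_add Bochner_Integration.integrable_mult_right measure_pmf.integrable_const intp[OF xi])
      have intZ: "integrable (measure_pmf (P (x,i))) (\<lambda>u. (Z u - Z (x,i))^2)"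
      proof (rule Bochner_Integration.integrable_bound[OF intg])
        show "AE u in measure_pmf (P (x,i)). norm ((Z u - Z (x,i))^2) \<le> norm (2 * (1 + \<bar>fst u - x\<bar> powr p) + 8 * K1^2)"
          unfolding AE_measure_pmf_iff real_norm_def abs_power2 using pw by (meson abs_ge_self order_trans)
      qed simp
      have "ExP P x i (\<lambda>u. (Z u - Z (x,i))^2) \<le> ExP P x i (\<lambda>u. 2 * (1 + \<bar>fst u - x\<bar> powr p) + 8 * K1^2)"
        unfolding ExP_def by (intro integral_mono_AE intZ intg) (unfold AE_measure_pmf_iff, use pw in blast)
      also have "\<dots> = 2 + 2 * ExP P x i (\<lambda>u. \<bar>fst u - x\<bar> powr p) + 8 * K1^2"
        unfolding ExP_def using intp[OF xi] by (simp add: measure_pmf.prob_space)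
      finally show "integrable (measure_pmf (P (x, i))) (\<lambda>u. (Zf S b \<nu> u - Zf S b \<nu> (x, i))^2) \<and>
          ExP P x i (\<lambda>u. (Zf S b \<nu> u - Zf S b \<nu> (x, i))^2) \<le> 2 + 2 * Cp + 8 * K1^2"
        using intZ Ep[OF xi] unfolding Z_def by simp
    qed
  qed
qed

end
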